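(* Let $\mathcal{A}'$ be the localization of $\mathcal{A}=W(2n|n)$ at the multiplicative set $D$ generated by $\{H+k : k\in\mathbb{Z}\}$, let $I'=\mathcal{A}'X+\mathcal{A}'E$, and let $M'=\mathcal{A}'/I'$ as a left $\mathcal{A}'$-module. Then $M'$ is locally $\mathfrak{g}_+$-finite, i.e. for every $v\in M'$ the subspace $U(\mathfrak{g}_+)v$ (where $U(\mathfrak{g}_+)$ is the subalgebra of $\mathcal{A}'$ generated by $X$ and $E$) is finite-dimensional.
   Context: Fix $n\ge1$ and an invertible complex matrix $\eta=(\eta^{ij})$ with $\eta^{ij}=\eta^{ji}$ and inverse $(\eta_{ij})$. $W(2n|n)$ is the associative superalgebra generated by even $x^1,\dots,x^n,\partial_1,\dots,\partial_n$ and odd $\gamma^1,\dots,\gamma^n$ with relations $x^ix^j=x^jx^i$, $\partial_i\partial_j=\partial_j\partial_i$, $\partial_ix^j-x^j\partial_i=\delta_i^j$, $\gamma^i$ commuting with all $x^j,\partial_j$, and $\gamma^i\gamma^j+\gamma^j\gamma^i=2\eta^{ij}$. Repeated indices are summed; $x_i=\eta_{ij}x^j$, $\partial^i=\eta^{ij}\partial_j$. Set $X=\frac{\sqrt{-1}}{\sqrt2}\gamma^i\partial_i$, $H=-\frac12(\partial_ix^i+x^i\partial_i)$, $E=-\frac12\partial^i\partial_i=X^2$, and $\mathfrak{g}_+=\mathbb{C}X\oplus\mathbb{C}E$. *)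

theory Defs
  imports Complex_Main
begin

text \<open>Indices 1..n of the paper are rendered as 0..n-1.
  The superalgebra W(2n|n) is characterised up to isomorphism by its presentation
  together with the PBW basis (normally ordered monomials are linearly independent);
  the localisation A' is characterised up to isomorphism as the (left) ring of fractions
  of A with respect to the multiplicative set D.\<close>

definition sym_invertible :: "nat \<Rightarrow> (nat \<Rightarrow> nat \<Rightarrow> complex) \<Rightarrow> bool" where
  "sym_invertible n eta \<longleftrightarrow>
     (\<forall>i<n. \<forall>j<n. eta i j = eta j i) \<and>
     (\<exists>etainv :: nat \<Rightarrow> nat \<Rightarrow> complex. \<forall>i<n. \<forall>k<n.
        (\<Sum>j<n. eta i j * etainv j k) = (if i = k then 1 else 0) \<and>
        (\<Sum>j<n. etainv i j * eta j k) = (if i = k then 1 else 0))"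

text \<open>A central embedding of the complex scalars: makes a ring a complex algebra.\<close>
definition is_scalar_emb :: "(complex \<Rightarrow> 'w::ring_1) \<Rightarrow> bool" where
  "is_scalar_emb c \<longleftrightarrow> c 1 = 1 \<and> (\<forall>a b. c (a + b) = c a + c b) \<and>
     (\<forall>a b. c (a * b) = c a * c b) \<and> (\<forall>a w. c a * w = w * c a)"

inductive_set gen_alg :: "(complex \<Rightarrow> 'w::ring_1) \<Rightarrow> 'w set \<Rightarrow> 'w set"
  for c :: "complex \<Rightarrow> 'w" and G :: "'w set" where
  scal: "c z \<in> gen_alg c G"
| gen: "g \<in> G \<Longrightarrow> g \<in> gen_alg c G"
| add: "a \<in> gen_alg c G \<Longrightarrow> b \<in> gen_alg c G \<Longrightarrow> a + b \<in> gen_alg c G"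
| mult: "a \<in> gen_alg c G \<Longrightarrow> b \<in> gen_alg c G \<Longrightarrow> a * b \<in> gen_alg c G"

definition W_relations ::
  "nat \<Rightarrow> (nat \<Rightarrow> nat \<Rightarrow> complex) \<Rightarrow> (complex \<Rightarrow> 'w::ring_1) \<Rightarrow>
   (nat \<Rightarrow> 'w) \<Rightarrow> (nat \<Rightarrow> 'w) \<Rightarrow> (nat \<Rightarrow> 'w) \<Rightarrow> bool" where
  "W_relations n eta c x d g \<longleftrightarrow> (\<forall>i<n. \<forall>j<n.
      x i * x j = x j * x i \<and>
      d i * d j = d j * d i \<and>
      d i * x j - x j * d i = c (if i = j then 1 else 0) \<and>
      g i * x j = x j * g i \<and>
      g i * d j = d j * g i \<and>
      g i * g j + g j * g i = c (2 * eta i j))"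

definition pbw_mono ::
  "nat \<Rightarrow> (nat \<Rightarrow> 'w::ring_1) \<Rightarrow> (nat \<Rightarrow> 'w) \<Rightarrow> (nat \<Rightarrow> 'w) \<Rightarrow>
   (nat \<Rightarrow> nat) \<times> (nat \<Rightarrow> nat) \<times> nat set \<Rightarrow> 'w" where
  "pbw_mono n x d g m = (case m of (alpha, beta, S) \<Rightarrow>
      foldr (\<lambda>i r. x i ^ alpha i * r) [0..<n] 1 *
      foldr (\<lambda>i r. d i ^ beta i * r) [0..<n] 1 *
      foldr (\<lambda>i r. g i * r) (sorted_list_of_set S) 1)"

definition pbw_indep ::
  "nat \<Rightarrow> (complex \<Rightarrow> 'w::ring_1) \<Rightarrow> (nat \<Rightarrow> 'w) \<Rightarrow> (nat \<Rightarrow> 'w) \<Rightarrow> (nat \<Rightarrow> 'w) \<Rightarrow> bool" where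
  "pbw_indep n c x d g \<longleftrightarrow>
     (\<forall>F coef. finite F \<and>
        (\<forall>(alpha, beta, S) \<in> F. (\<forall>i\<ge>n. alpha i = 0 \<and> beta i = 0) \<and> S \<subseteq> {..<n}) \<and>
        (\<Sum>m\<in>F. c (coef m) * pbw_mono n x d g m) = 0
        \<longrightarrow> (\<forall>m\<in>F. coef m = 0))"

text \<open>(c, x, d, g) present W(2n|n): a complex algebra generated by x^i, d_i, gamma^i
  subject to the defining relations, with no further relations (PBW independence).\<close>
definition is_W ::
  "nat \<Rightarrow> (nat \<Rightarrow> nat \<Rightarrow> complex) \<Rightarrow> (complex \<Rightarrow> 'w::ring_1) \<Rightarrow>
   (nat \<Rightarrow> 'w) \<Rightarrow> (nat \<Rightarrow> 'w) \<Rightarrow> (nat \<Rightarrow> 'w) \<Rightarrow> bool" where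
  "is_W n eta c x d g \<longleftrightarrow> is_scalar_emb c \<and> W_relations n eta c x d g \<and>
     gen_alg c (x ` {..<n} \<union> d ` {..<n} \<union> g ` {..<n}) = UNIV \<and>
     pbw_indep n c x d g"

definition Xop :: "nat \<Rightarrow> (complex \<Rightarrow> 'w::ring_1) \<Rightarrow> (nat \<Rightarrow> 'w) \<Rightarrow> (nat \<Rightarrow> 'w) \<Rightarrow> 'w" where
  "Xop n c d g = c (\<i> / complex_of_real (sqrt 2)) * (\<Sum>i<n. g i * d i)"

definition Hop :: "nat \<Rightarrow> (complex \<Rightarrow> 'w::ring_1) \<Rightarrow> (nat \<Rightarrow> 'w) \<Rightarrow> (nat \<Rightarrow> 'w) \<Rightarrow> 'w" where
  "Hop n c x d = c (- 1 / 2) * (\<Sum>i<n. d i * x i + x i * d i)"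

definition Eop :: "nat \<Rightarrow> (nat \<Rightarrow> nat \<Rightarrow> complex) \<Rightarrow> (complex \<Rightarrow> 'w::ring_1) \<Rightarrow> (nat \<Rightarrow> 'w) \<Rightarrow> 'w" where
  "Eop n eta c d = c (- 1 / 2) * (\<Sum>i<n. \<Sum>j<n. c (eta i j) * d j * d i)"

inductive_set Dset :: "'w::ring_1 \<Rightarrow> 'w set" for H :: 'w where
  one: "1 \<in> Dset H"
| step: "s \<in> Dset H \<Longrightarrow> (H + of_int k) * s \<in> Dset H"

definition is_localization :: "'w::ring_1 set \<Rightarrow> ('w \<Rightarrow> 'l::ring_1) \<Rightarrow> bool" where
  "is_localization D phi \<longleftrightarrow>
     phi 1 = 1 \<and> (\<forall>a b. phi (a + b) = phi a + phi b) \<and> (\<forall>a b. phi (a * b) = phi a * phi b) \<and>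
     (\<forall>s\<in>D. \<exists>t. t * phi s = 1 \<and> phi s * t = 1) \<and>
     (\<forall>y. \<exists>s\<in>D. \<exists>a t. t * phi s = 1 \<and> y = t * phi a) \<and>
     (\<forall>a. phi a = 0 \<longleftrightarrow> (\<exists>s\<in>D. s * a = 0))"

definition left_ideal2 :: "'l::ring_1 \<Rightarrow> 'l \<Rightarrow> 'l set" where
  "left_ideal2 X E = {a * X + b * E | a b. True}"

text \<open>A'/I' is locally finite for the subalgebra U generated by X and E:
  for each class v = [w], the subspace U v is contained in (hence is) a finite-dimensional
  subspace, i.e. lies in the span of finitely many classes [b].\<close>
definition locally_finite_quot :: "(complex \<Rightarrow> 'l::ring_1) \<Rightarrow> 'l \<Rightarrow> 'l \<Rightarrow> 'l set \<Rightarrow> bool" where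
  "locally_finite_quot sc X E I \<longleftrightarrow>
     (\<forall>w. \<exists>B. finite B \<and>
        (\<forall>u\<in>gen_alg sc {X, E}. \<exists>f. u * w - (\<Sum>b\<in>B. sc (f b) * b) \<in> I))"

end

theory Submission imports Defs begin

locale Wl =
  fixes n :: nat and eta :: "nat \<Rightarrow> nat \<Rightarrow> complex" and c :: "complex \<Rightarrow> 'w::ring_1"
    and x d g :: "nat \<Rightarrow> 'w"
  assumes emb: "is_scalar_emb c" and rel: "W_relations n eta c x d g"
begin

lemma c1[simp]: "c 1 = 1" using emb unfolding is_scalar_emb_def by blast
lemma c_add: "c (a + b) = c a + c b" using emb unfolding is_scalar_emb_def by blast
lemma c_mult: "c (a * b) = c a * c b" using emb unfolding is_scalar_emb_def by blast
lemma c_comm: "c a * w = w * c a" using emb unfolding is_scalar_emb_def by blast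
lemma c0[simp]: "c 0 = 0"
proof -
  have "c 0 + c 0 = c 0 + 0" using c_add[of 0 0] by simp
  then show ?thesis by (rule add_left_imp_eq)
qed
lemma c_neg: "c (- a) = - c a"
proof -
  have "c a + c (-a) = 0" using c_add[of a "-a"] by simp
  then show ?thesis using minus_unique by metis
qed
lemma c_diff: "c (a - b) = c a - c b"
  using c_add[of a "-b"] c_neg[of b] by simp
lemma c_cc: "c a * (c b * w) = c (a * b) * w" by (simp add: c_mult mult.assoc)
lemma c_of_nat[simp]: "c (of_nat k) = of_nat k"
  by (induction k) (simp_all add: c_add)
lemma c_numeral[simp]: "c (numeral k) = numeral k"
  using c_of_nat[of "numeral k"] by simp
lemma c_of_int[simp]: "c (of_int k) = of_int k"
  by (cases k rule: int_cases) (simp_all add: c_neg c_diff)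

lemma xx: "i<n \<Longrightarrow> j<n \<Longrightarrow> x i * x j = x j * x i" using rel by (simp add: W_relations_def)
lemma dd: "i<n \<Longrightarrow> j<n \<Longrightarrow> d i * d j = d j * d i" using rel by (simp add: W_relations_def)
lemma dx: "i<n \<Longrightarrow> j<n \<Longrightarrow> d i * x j - x j * d i = c (if i = j then 1 else 0)" using rel by (simp add: W_relations_def)
lemma gx: "i<n \<Longrightarrow> j<n \<Longrightarrow> g i * x j = x j * g i" using rel by (simp add: W_relations_def)
lemma gd: "i<n \<Longrightarrow> j<n \<Longrightarrow> g i * d j = d j * g i" using rel by (simp add: W_relations_def)
lemma gg: "i<n \<Longrightarrow> j<n \<Longrightarrow> g i * g j + g j * g i = c (2 * eta i j)" using rel by (simp add: W_relations_def)

lemma alg0: "0 \<in> gen_alg c G" using gen_alg.scal[of c 0 G] by simp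
lemma alg1: "1 \<in> gen_alg c G" using gen_alg.scal[of c 1 G] by simp

lemma comm_mult: fixes p a b :: 'w assumes "p * a = a * p" "p * b = b * p" shows "p * (a * b) = (a * b) * p"
proof -
  have "p * (a * b) = (p * a) * b" by (simp add: mult.assoc)
  also have "\<dots> = a * (p * b)" using assms(1) by (simp add: mult.assoc)
  also have "\<dots> = (a * b) * p" using assms(2) by (simp add: mult.assoc)
  finally show ?thesis .
qed

lemma comm_mult': fixes p a b :: 'w assumes "a * p = p * a" "b * p = p * b" shows "(a * b) * p = p * (a * b)"
  using comm_mult[of p a b] assms by simp

abbreviation "Dalg \<equiv> gen_alg c (d ` {..<n})"

lemma d_comm_Dalg: assumes "i<n" shows "a \<in> Dalg \<Longrightarrow> d i * a = a * d i"
proof (induction a rule: gen_alg.induct)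
  case (scal z) then show ?case by (metis c_comm)
next
  case (gen a) then show ?case using dd assms by auto
next
  case (add a b) then show ?case by (simp add: distrib_left distrib_right)
next
  case (mult a b) show ?case by (rule comm_mult[OF mult.IH])
qed

lemma Dalg_comm: assumes "b \<in> Dalg" shows "a \<in> Dalg \<Longrightarrow> a * b = b * a"
proof (induction a rule: gen_alg.induct)
  case (scal z) then show ?case by (metis c_comm)
next
  case (gen a) then show ?case using d_comm_Dalg assms by auto
next
  case (add a1 a2)
  have "(a1 + a2) * b = a1 * b + a2 * b" by (simp only: distrib_right)
  also have "\<dots> = b * a1 + b * a2" using add.IH by simp
  also have "\<dots> = b * (a1 + a2)" by (simp only: distrib_left)
  finally show ?case .
next
  case (mult a1 a2) show ?case by (rule comm_mult'[OF mult.IH])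
qed

lemma g_comm_Dalg: assumes "i<n" shows "a \<in> Dalg \<Longrightarrow> g i * a = a * g i"
proof (induction a rule: gen_alg.induct)
  case (scal z) then show ?case by (metis c_comm)
next
  case (gen a) then show ?case using gd assms by auto
next
  case (add a b) then show ?case by (simp add: distrib_left distrib_right)
next
  case (mult a b) show ?case by (rule comm_mult[OF mult.IH])
qed

lemma Dalg_x: assumes "k<n" shows "a \<in> Dalg \<Longrightarrow> a * x k - x k * a \<in> Dalg"
proof (induction a rule: gen_alg.induct)
  case (scal z)
  have "c z * x k = x k * c z" by (rule c_comm)
  then show ?case using alg0 by simp
next
  case (gen a) then show ?case using dx alg0 alg1 assms by auto
next
  case (add a b)
  have "(a + b) * x k - x k * (a + b) = (a * x k - x k * a) + (b * x k - x k * b)"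
    by (simp add: algebra_simps)
  then show ?case using add.IH by (metis gen_alg.add)
next
  case (mult a b)
  have "(a * b) * x k - x k * (a * b) = a * (b * x k - x k * b) + (a * x k - x k * a) * b"
    by (simp add: algebra_simps)
  then show ?case using mult.IH mult.hyps by (metis gen_alg.add gen_alg.mult)
qed

lemma Dalg_sum: "finite S \<Longrightarrow> (\<And>i. i \<in> S \<Longrightarrow> f i \<in> Dalg) \<Longrightarrow> sum f S \<in> Dalg"
proof (induction S rule: finite_induct)
  case empty then show ?case using alg0 by simp
next
  case (insert a F) then show ?case using gen_alg.add[of "f a" c _ "sum f F"] by simp
qed

lemma d_in: "i < n \<Longrightarrow> d i \<in> Dalg" by (simp add: gen_alg.gen)

abbreviation "EE \<equiv> Eop n eta c d"

lemma E_Dalg: "EE \<in> Dalg"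
  unfolding Eop_def
  by (intro gen_alg.mult gen_alg.scal Dalg_sum) (auto intro!: gen_alg.mult gen_alg.scal d_in)


lemma Q_comm:
  assumes "a * EE = EE * a"
  shows "\<exists>N. \<forall>m. \<exists>b. EE ^ (m + N) * a = b * EE ^ m"
proof -
  have "\<forall>m. EE ^ (m + 0) * a = a * EE ^ m"
    using power_commuting_commutes[of EE a] assms by simp
  then show ?thesis by blast
qed

lemma Q_add:
  assumes "\<exists>N. \<forall>m. \<exists>b. EE ^ (m + N) * a1 = b * EE ^ m"
    and "\<exists>N. \<forall>m. \<exists>b. EE ^ (m + N) * a2 = b * EE ^ m"
  shows "\<exists>N. \<forall>m. \<exists>b. EE ^ (m + N) * (a1 + a2) = b * EE ^ m"
proof -
  obtain N1 where N1: "\<forall>m. \<exists>b. EE ^ (m + N1) * a1 = b * EE ^ m" using assms(1) by blast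
  obtain N2 where N2: "\<forall>m. \<exists>b. EE ^ (m + N2) * a2 = b * EE ^ m" using assms(2) by blast
  have "\<exists>b. EE ^ (m + (N1 + N2)) * (a1 + a2) = b * EE ^ m" for m
  proof -
    obtain b1 where b1: "EE ^ ((N2 + m) + N1) * a1 = b1 * EE ^ (N2 + m)" using N1 by blast
    obtain b2 where b2: "EE ^ ((N1 + m) + N2) * a2 = b2 * EE ^ (N1 + m)" using N2 by blast
    have "EE ^ (m + (N1 + N2)) * (a1 + a2) = EE ^ ((N2 + m) + N1) * a1 + EE ^ ((N1 + m) + N2) * a2"
      by (simp add: distrib_left add_ac)
    also have "\<dots> = (b1 * EE ^ N2 + b2 * EE ^ N1) * EE ^ m"
      unfolding b1 b2 by (simp only: power_add distrib_right mult.assoc)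
    finally show ?thesis by blast
  qed
  then show ?thesis by blast
qed

lemma Q_mult:
  assumes "\<exists>N. \<forall>m. \<exists>b. EE ^ (m + N) * a1 = b * EE ^ m"
    and "\<exists>N. \<forall>m. \<exists>b. EE ^ (m + N) * a2 = b * EE ^ m"
  shows "\<exists>N. \<forall>m. \<exists>b. EE ^ (m + N) * (a1 * a2) = b * EE ^ m"
proof -
  obtain N1 where N1: "\<forall>m. \<exists>b. EE ^ (m + N1) * a1 = b * EE ^ m" using assms(1) by blast
  obtain N2 where N2: "\<forall>m. \<exists>b. EE ^ (m + N2) * a2 = b * EE ^ m" using assms(2) by blast
  have "\<exists>b. EE ^ (m + (N2 + N1)) * (a1 * a2) = b * EE ^ m" for m
  proof -
    obtain b1 where b1: "EE ^ ((m + N2) + N1) * a1 = b1 * EE ^ (m + N2)" using N1 by blast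
    obtain b2 where b2: "EE ^ (m + N2) * a2 = b2 * EE ^ m" using N2 by blast
    have "EE ^ (m + (N2 + N1)) * (a1 * a2) = (EE ^ ((m + N2) + N1) * a1) * a2"
      by (simp add: mult.assoc add_ac)
    also have "\<dots> = b1 * (EE ^ (m + N2) * a2)" unfolding b1 by (simp add: mult.assoc)
    also have "\<dots> = (b1 * b2) * EE ^ m" unfolding b2 by (simp add: mult.assoc)
    finally show ?thesis by blast
  qed
  then show ?thesis by blast
qed

lemma Q_x:
  assumes k: "k < n"
  shows "\<exists>N. \<forall>m. \<exists>b. EE ^ (m + N) * x k = b * EE ^ m"
proof -
  define L where "L = EE * x k - x k * EE"
  have LD: "L \<in> Dalg" unfolding L_def by (rule Dalg_x[OF k E_Dalg])
  have LE: "L * EE = EE * L" by (rule Dalg_comm[OF E_Dalg LD])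
  have Ex: "EE * x k = x k * EE + L" unfolding L_def by simp
  have key: "EE ^ Suc m * x k = (x k * EE + of_nat (Suc m) * L) * EE ^ m" for m
  proof (induction m)
    case 0 then show ?case using Ex by simp
  next
    case (Suc m)
    have c1: "EE * (of_nat (Suc m) * L) = of_nat (Suc m) * L * EE"
    proof -
      have "EE * (of_nat (Suc m) * L) = (EE * of_nat (Suc m)) * L" by (simp only: mult.assoc)
      also have "\<dots> = (of_nat (Suc m) * EE) * L" by (simp only: mult_of_nat_commute)
      also have "\<dots> = of_nat (Suc m) * (EE * L)" by (simp only: mult.assoc)
      also have "\<dots> = of_nat (Suc m) * L * EE" using LE by (simp only: mult.assoc)
      finally show ?thesis .
    qed
    have "EE ^ Suc (Suc m) * x k = EE * (EE ^ Suc m * x k)" by (simp add: mult.assoc)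
    also have "\<dots> = EE * ((x k * EE + of_nat (Suc m) * L) * EE ^ m)" using Suc by simp
    also have "\<dots> = (EE * x k * EE + EE * (of_nat (Suc m) * L)) * EE ^ m"
      by (simp add: distrib_left distrib_right mult.assoc)
    also have "\<dots> = ((x k * EE + L) * EE + of_nat (Suc m) * L * EE) * EE ^ m"
      using Ex c1 by simp
    also have "\<dots> = (x k * EE + of_nat (Suc (Suc m)) * L) * (EE * EE ^ m)"
      by (simp add: distrib_left distrib_right mult.assoc algebra_simps)
    finally show ?case by simp
  qed
  have "\<forall>m. EE ^ (m + 1) * x k = (x k * EE + of_nat (Suc m) * L) * EE ^ m"
    using key by simp
  then show ?thesis by blast
qed

lemma Q_all:
  assumes "a \<in> gen_alg c (x ` {..<n} \<union> d ` {..<n} \<union> g ` {..<n})"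
  shows "\<exists>N. \<forall>m. \<exists>b. EE ^ (m + N) * a = b * EE ^ m"
  using assms
proof (induction a rule: gen_alg.induct)
  case (scal z) then show ?case by (intro Q_comm) (metis c_comm)
next
  case (gen a)
  then consider (x) k where "k<n" "a = x k" | (d) k where "k<n" "a = d k" | (g) k where "k<n" "a = g k"
    by blast
  then show ?case
  proof cases
    case x then show ?thesis using Q_x by simp
  next
    case d then show ?thesis using d_comm_Dalg[OF _ E_Dalg] by (intro Q_comm) simp
  next
    case g then show ?thesis using g_comm_Dalg[OF _ E_Dalg] by (intro Q_comm) simp
  qed
next
  case (add a b) show ?case by (rule Q_add[OF add.IH])
next
  case (mult a b) show ?case by (rule Q_mult[OF mult.IH])
qed

abbreviation "XX \<equiv> Xop n c d g"
abbreviation "HH \<equiv> Hop n c x d"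

lemma alpha_sq: "(\<i> / complex_of_real (sqrt 2)) * (\<i> / complex_of_real (sqrt 2)) = - 1 / 2"
proof -
  have "complex_of_real (sqrt 2) * complex_of_real (sqrt 2) = 2"
    by (simp flip: of_real_mult)
  then show ?thesis by (simp add: field_simps)
qed

lemma c_sum: "c z * sum f S = (\<Sum>i\<in>S. c z * f i)" by (rule sum_distrib_left)

lemma XX_sq: "XX * XX = EE"
proof -
  define S where "S = (\<Sum>i<n. g i * d i)"
  define T where "T = (\<Sum>i<n. \<Sum>j<n. g i * g j * (d i * d j))"
  define U where "U = (\<Sum>i<n. \<Sum>j<n. c (eta i j) * (d i * d j))"
  define al where "al = \<i> / complex_of_real (sqrt 2)"
  have X: "XX = c al * S" unfolding Xop_def S_def al_def by simp
  have "XX * XX = c al * (S * c al) * S" unfolding X by (simp add: mult.assoc)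
  also have "\<dots> = c al * (c al * S) * S" by (simp only: c_comm)
  also have "\<dots> = c (-1/2) * (S * S)" unfolding al_def
    by (simp only: mult.assoc c_cc alpha_sq)
  finally have XS: "XX * XX = c (-1/2) * (S * S)" .
  have ST: "S * S = T" unfolding S_def T_def sum_product
  proof (intro sum.cong refl)
    fix i j assume "i \<in> {..<n}" "j \<in> {..<n}"
    then have "d i * g j = g j * d i" using gd by simp
    then show "g i * d i * (g j * d j) = g i * g j * (d i * d j)"
      by (simp add: mult.assoc) (metis mult.assoc)
  qed
  have T2: "T = (\<Sum>i<n. \<Sum>j<n. g j * g i * (d i * d j))"
    unfolding T_def
    apply (subst sum.swap)
    apply (intro sum.cong refl)
    using dd by simp
  have "T + T = (\<Sum>i<n. \<Sum>j<n. g i * g j * (d i * d j)) + (\<Sum>i<n. \<Sum>j<n. g j * g i * (d i * d j))"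
    by (rule arg_cong2[where f="(+)"]) (simp add: T_def, rule T2)
  also have "\<dots> = (\<Sum>i<n. \<Sum>j<n. (g i * g j + g j * g i) * (d i * d j))"
    by (simp add: sum.distrib[symmetric] distrib_right)
  also have "\<dots> = (\<Sum>i<n. \<Sum>j<n. c 2 * (c (eta i j) * (d i * d j)))"
    by (intro sum.cong refl) (simp add: gg c_mult mult.assoc)
  also have "\<dots> = c 2 * U" unfolding U_def by (simp add: sum_distrib_left)
  finally have TT: "T + T = c 2 * U" .
  have "T = c (1/2) * (T + T)"
  proof -
    have "c (1/2) * (T + T) = c (1/2) * c 2 * T" by (simp add: distrib_right distrib_left mult.assoc mult_2)
    also have "\<dots> = T" by (simp only: c_mult[symmetric]) simp
    finally show ?thesis by simp
  qed
  also have "\<dots> = U" unfolding TT by (simp only: c_cc) simp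
  finally have TU: "T = U" .
  have "EE = c (-1/2) * U" unfolding Eop_def U_def
    apply (intro arg_cong[where f="\<lambda>t. c (-1/2) * t"] sum.cong refl)
    using dd by (simp add: mult.assoc)
  then show ?thesis using XS ST TU by simp
qed

definition cm :: "'w \<Rightarrow> 'w \<Rightarrow> 'w" where "cm a b = a * b - b * a"

lemma cm_add_r: "cm p (a + b) = cm p a + cm p b" unfolding cm_def by (simp add: algebra_simps)
lemma cm_add_l: "cm (a + b) p = cm a p + cm b p" unfolding cm_def by (simp add: algebra_simps)
lemma cm_mult_r: "cm p (a * b) = cm p a * b + a * cm p b" unfolding cm_def by (simp add: algebra_simps)
lemma cm_sum_r: "cm p (sum f S) = (\<Sum>i\<in>S. cm p (f i))"
  unfolding cm_def by (simp add: sum_distrib_left sum_distrib_right sum_subtractf)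
lemma cm_sum_l: "cm (sum f S) p = (\<Sum>i\<in>S. cm (f i) p)"
  unfolding cm_def by (simp add: sum_distrib_left sum_distrib_right sum_subtractf)
lemma cm_c_r: "cm p (c z * a) = c z * cm p a"
proof -
  have "p * (c z * a) = c z * (p * a)" by (metis c_comm mult.assoc)
  then show ?thesis unfolding cm_def by (simp add: right_diff_distrib mult.assoc)
qed
lemma cm_c_l: "cm (c z * a) p = c z * cm a p"
proof -
  have "p * (c z * a) = c z * (p * a)" by (metis c_comm mult.assoc)
  then show ?thesis unfolding cm_def by (simp add: right_diff_distrib mult.assoc)
qed
lemma cm_1_l: "cm 1 p = 0" unfolding cm_def by simp

abbreviation "NN \<equiv> (\<Sum>k<n. x k * d k)"

lemma N_d: assumes j: "j < n" shows "cm NN (d j) = - d j"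
proof -
  have "cm NN (d j) = (\<Sum>k<n. cm (x k * d k) (d j))" by (rule cm_sum_l)
  also have "\<dots> = (\<Sum>k<n. - (if k = j then d k else 0))"
  proof (intro sum.cong refl)
    fix k assume "k \<in> {..<n}"
    then have k: "k < n" by simp
    have e1: "d k * d j = d j * d k" using dd j k by simp
    have e2: "x k * d j - d j * x k = - c (if j = k then 1 else 0)"
      using dx[OF j k] by (metis minus_diff_eq)
    have "cm (x k * d k) (d j) = (x k * d j - d j * x k) * d k"
      unfolding cm_def using e1 by (simp add: algebra_simps)
    also have "\<dots> = - (if k = j then d k else 0)" unfolding e2 by auto
    finally show "cm (x k * d k) (d j) = - (if k = j then d k else 0)" .
  qed
  also have "\<dots> = - d j" using j by (simp add: sum_negf)
  finally show ?thesis .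
qed

lemma N_E: "cm NN EE = c (-2) * EE"
proof -
  have "cm NN EE = c (-1/2) * (\<Sum>i<n. \<Sum>j<n. cm NN (c (eta i j) * d j * d i))"
    unfolding Eop_def by (simp add: cm_c_r cm_sum_r)
  also have "\<dots> = c (-1/2) * (\<Sum>i<n. \<Sum>j<n. c (-2) * (c (eta i j) * d j * d i))"
  proof (intro arg_cong[where f="\<lambda>t. c (-1/2) * t"] sum.cong refl)
    fix i j assume "i \<in> {..<n}" "j \<in> {..<n}"
    then have i: "i < n" and j: "j < n" by auto
    have "cm NN (c (eta i j) * d j * d i) = c (eta i j) * cm NN (d j * d i)"
      by (simp only: mult.assoc cm_c_r)
    also have "\<dots> = c (eta i j) * (cm NN (d j) * d i + d j * cm NN (d i))"
      by (simp only: cm_mult_r)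
    also have "\<dots> = c (eta i j) * (c (-2) * (d j * d i))"
      using N_d[OF i] N_d[OF j] by (simp add: c_neg mult_2 algebra_simps)
    also have "\<dots> = c (-2) * (c (eta i j) * d j * d i)"
      by (simp add: mult.assoc c_cc mult.commute)
    finally show "cm NN (c (eta i j) * d j * d i) = c (-2) * (c (eta i j) * d j * d i)" .
  qed
  also have "\<dots> = c (-2) * EE"
    unfolding Eop_def by (simp add: sum_distrib_left c_cc mult.commute)
  finally show ?thesis .
qed

lemma H_E: "cm HH EE = 2 * EE"
proof -
  have "cm HH EE = c (-1/2) * (\<Sum>k<n. cm (d k * x k + x k * d k) EE)"
    unfolding Hop_def by (simp add: cm_c_l cm_sum_l)
  also have "\<dots> = c (-1/2) * (\<Sum>k<n. c 2 * cm (x k * d k) EE)"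
  proof (intro arg_cong[where f="\<lambda>t. c (-1/2) * t"] sum.cong refl)
    fix k assume "k \<in> {..<n}"
    then have k: "k < n" by simp
    have "d k * x k = 1 + x k * d k" using dx[OF k k] by (simp add: algebra_simps)
    then have "d k * x k + x k * d k = 1 + c 2 * (x k * d k)" by (simp add: mult_2 add.assoc)
    then show "cm (d k * x k + x k * d k) EE = c 2 * cm (x k * d k) EE"
      by (simp add: cm_add_l cm_1_l mult_2)
  qed
  also have "\<dots> = c (-1/2) * (c 2 * cm NN EE)" by (simp add: sum_distrib_left cm_sum_l)
  also have "\<dots> = c (-1/2) * (c 2 * (c (-2) * EE))" by (simp add: N_E)
  also have "\<dots> = 2 * EE" by (simp only: c_cc) simp
  finally show ?thesis .
qed

lemma E_shift: "EE * (HH + of_int k) = (HH + of_int (k - 2)) * EE"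
proof -
  have "EE * HH = HH * EE - 2 * EE" using H_E unfolding cm_def by (simp add: algebra_simps)
  moreover have "EE * of_int k = of_int k * EE" by (simp only: mult_of_int_commute)
  ultimately show ?thesis by (simp add: algebra_simps)
qed

lemma Dset_shift: "s \<in> Dset HH \<Longrightarrow> \<exists>s'\<in>Dset HH. EE * s = s' * EE"
proof (induction s rule: Dset.induct)
  case one then show ?case using Dset.one by force
next
  case (step s k)
  then obtain s' where s': "s' \<in> Dset HH" "EE * s = s' * EE" by blast
  have "EE * ((HH + of_int k) * s) = (HH + of_int (k - 2)) * (EE * s)"
    by (simp add: E_shift flip: mult.assoc)
  also have "\<dots> = ((HH + of_int (k - 2)) * s') * EE" using s' by (simp add: mult.assoc)
  finally show ?case using Dset.step[OF s'(1)] by blast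
qed
end

lemma inv_shift:
  fixes E :: "'l::ring_1" and P :: "'l \<Rightarrow> bool"
  assumes sh: "\<And>p. P p \<Longrightarrow> \<exists>p'. P p' \<and> E * p = p' * E"
    and inv: "\<And>p. P p \<Longrightarrow> \<exists>t. t * p = 1 \<and> p * t = 1"
  shows "P p \<Longrightarrow> t * p = 1 \<Longrightarrow> p * t = 1 \<Longrightarrow> \<exists>y. E ^ m * t = y * E ^ m"
proof (induction m arbitrary: p t)
  case 0 then show ?case by (intro exI[of _ t]) simp
next
  case (Suc m)
  obtain p' where p': "P p'" "E * p = p' * E" using sh[OF Suc.prems(1)] by blast
  obtain t' where t': "t' * p' = 1" "p' * t' = 1" using inv[OF p'(1)] by blast
  have Et: "E * t = t' * E"
  proof -
    have "t' * E = t' * E * (p * t)" using Suc.prems(3) by simp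
    also have "\<dots> = t' * (E * p) * t" by (simp add: mult.assoc)
    also have "\<dots> = (t' * p') * E * t" using p'(2) by (simp add: mult.assoc)
    also have "\<dots> = E * t" using t'(1) by simp
    finally show ?thesis by simp
  qed
  obtain y where y: "E ^ m * t' = y * E ^ m" using Suc.IH[OF p'(1) t'] by blast
  have "E ^ Suc m * t = E ^ m * (E * t)" by (simp only: power_Suc2 mult.assoc)
  also have "\<dots> = (E ^ m * t') * E" using Et by (simp add: mult.assoc)
  also have "\<dots> = (y * E ^ m) * E" using y by (simp only:)
  also have "\<dots> = y * E ^ Suc m" by (simp only: power_Suc2 mult.assoc)
  finally show ?case by blast
qed

lemma span_closed:
  fixes X E w z :: "'l::ring_1" and sc :: "complex \<Rightarrow> 'l" and K :: nat
  assumes sc_add: "\<And>a b. sc (a + b) = sc a + sc b"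
    and sc_mult: "\<And>a b. sc (a * b) = sc a * sc b"
    and sc0: "sc 0 = 0" and sc1: "sc 1 = 1"
    and XX: "X * X = E" and EX: "E * X = X * E"
    and Xsc: "\<And>a. X * sc a = sc a * X" and Esc: "\<And>a. E * sc a = sc a * E"
    and K: "K \<ge> 1" and fin: "E ^ K * w = z * E"
  shows "\<exists>B. finite B \<and> (\<forall>u\<in>gen_alg sc {X, E}. \<exists>f. u * w - (\<Sum>b\<in>B. sc (f b) * b) \<in> left_ideal2 X E)"
proof -
  define I where "I = left_ideal2 X E"
  define B where "B = (\<lambda>k. E ^ k * w) ` {..<K} \<union> (\<lambda>k. X * E ^ k * w) ` {..<K}"
  define W where "W = {v. \<exists>f. v - (\<Sum>b\<in>B. sc (f b) * b) \<in> I}"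
  have finB: "finite B" unfolding B_def by simp
  have I0: "0 \<in> I" unfolding I_def left_ideal2_def by (intro CollectI exI[of _ 0]) simp
  have Iadd: "p + q \<in> I" if hpq: "p \<in> I" "q \<in> I" for p q
  proof -
    obtain a b where "p = a * X + b * E" using hpq(1) unfolding I_def left_ideal2_def by blast
    moreover obtain a' b' where "q = a' * X + b' * E" using hpq(2) unfolding I_def left_ideal2_def by blast
    ultimately have "p + q = (a + a') * X + (b + b') * E" by (simp add: algebra_simps)
    then show ?thesis unfolding I_def left_ideal2_def by blast
  qed
  have Ilm: "r * p \<in> I" if hpq: "p \<in> I" for p r
  proof -
    obtain a b where "p = a * X + b * E" using hpq(1) unfolding I_def left_ideal2_def by blast
    then have "r * p = (r * a) * X + (r * b) * E" by (simp add: algebra_simps)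
    then show ?thesis unfolding I_def left_ideal2_def by blast
  qed
  have IE: "r * E \<in> I" for r
  proof -
    have "r * E = 0 * X + r * E" by simp
    then show ?thesis unfolding I_def left_ideal2_def by blast
  qed
  have W_I: "p \<in> W" if "p \<in> I" for p
    unfolding W_def using that sc0 by (intro CollectI exI[of _ "\<lambda>_. 0"]) simp
  have W_add: "p + q \<in> W" if hpq: "p \<in> W" "q \<in> W" for p q
  proof -
    obtain f where f: "p - (\<Sum>b\<in>B. sc (f b) * b) \<in> I" using hpq(1) unfolding W_def by blast
    obtain f' where f': "q - (\<Sum>b\<in>B. sc (f' b) * b) \<in> I" using hpq(2) unfolding W_def by blast
    have "(p + q) - (\<Sum>b\<in>B. sc (f b + f' b) * b)
        = (p - (\<Sum>b\<in>B. sc (f b) * b)) + (q - (\<Sum>b\<in>B. sc (f' b) * b))"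
      by (simp add: sc_add distrib_right sum.distrib algebra_simps)
    then have h: "(p + q) - (\<Sum>b\<in>B. sc (f b + f' b) * b) \<in> I" using Iadd[OF f f'] by (simp only:)
    show ?thesis unfolding W_def by (rule CollectI, rule exI[of _ "\<lambda>b. f b + f' b"], simp only: h)
  qed
  have W_sc: "sc a * p \<in> W" if hpq: "p \<in> W" for p a
  proof -
    obtain f where f: "p - (\<Sum>b\<in>B. sc (f b) * b) \<in> I" using hpq(1) unfolding W_def by blast
    have "sc a * p - (\<Sum>b\<in>B. sc (a * f b) * b) = sc a * (p - (\<Sum>b\<in>B. sc (f b) * b))"
      by (simp add: sc_mult right_diff_distrib sum_distrib_left mult.assoc)
    then have h: "sc a * p - (\<Sum>b\<in>B. sc (a * f b) * b) \<in> I" using Ilm[OF f, of "sc a"] by (simp only:)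
    show ?thesis unfolding W_def by (rule CollectI, rule exI[of _ "\<lambda>b. a * f b"], simp only: h)
  qed
  have W_B: "b \<in> W" if "b \<in> B" for b
  proof -
    have "(\<Sum>b'\<in>B. sc (if b' = b then 1 else 0) * b') = (\<Sum>b'\<in>B. if b' = b then b' else 0)"
      by (intro sum.cong refl) (simp add: sc0 sc1)
    also have "\<dots> = b" using that finB by simp
    finally have h: "b - (\<Sum>b'\<in>B. sc (if b' = b then 1 else 0) * b') \<in> I" using I0 by simp
    show ?thesis unfolding W_def by (rule CollectI, rule exI[of _ "\<lambda>b'. if b' = b then 1 else 0"], simp only: h)
  qed
  have W_sum: "finite S \<Longrightarrow> (\<And>i. i \<in> S \<Longrightarrow> F i \<in> W) \<Longrightarrow> sum F S \<in> W" for S and F :: "'l \<Rightarrow> 'l"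
  proof (induction S rule: finite_induct)
    case empty then show ?case using W_I[OF I0] by simp
  next
    case (insert a S) then show ?case using W_add by simp
  qed
  have W_lmul: "p * v \<in> W" if pB: "\<And>b. b \<in> B \<Longrightarrow> p * b \<in> W" and psc: "\<And>a. p * sc a = sc a * p"
    and v: "v \<in> W" for p v
  proof -
    obtain f where f: "v - (\<Sum>b\<in>B. sc (f b) * b) \<in> I" using v unfolding W_def by blast
    define i where "i = v - (\<Sum>b\<in>B. sc (f b) * b)"
    have "v = (\<Sum>b\<in>B. sc (f b) * b) + i" unfolding i_def by simp
    then have "p * v = (\<Sum>b\<in>B. sc (f b) * (p * b)) + p * i"
      by (simp add: distrib_left sum_distrib_left psc flip: mult.assoc)
    moreover have "(\<Sum>b\<in>B. sc (f b) * (p * b)) \<in> W"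
      using finB by (rule W_sum) (intro W_sc pB)
    moreover have "p * i \<in> W" using f unfolding i_def by (intro W_I Ilm)
    ultimately show ?thesis using W_add by simp
  qed
  have Epow: "E ^ k * w \<in> W" if "k \<le> K" for k
  proof (cases "k < K")
    case True then show ?thesis using W_B unfolding B_def by blast
  next
    case False then have "k = K" using that by simp
    then show ?thesis using fin IE W_I by simp
  qed
  have XEpow: "X * E ^ k * w \<in> W" if "k \<le> K" for k
  proof (cases "k < K")
    case True then show ?thesis using W_B unfolding B_def by blast
  next
    case False then have "k = K" using that by simp
    then have "X * E ^ k * w = (X * z) * E" using fin by (simp add: mult.assoc)
    then show ?thesis using IE W_I by simp
  qed
  have XB: "X * b \<in> W" if "b \<in> B" for b
  proof -
    from that consider (a) k where "k < K" "b = E ^ k * w" | (b) k where "k < K" "b = X * E ^ k * w"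
      unfolding B_def by blast
    then show ?thesis
    proof cases
      case a then show ?thesis using XEpow[of k] by (simp add: mult.assoc)
    next
      case b
      then have "X * b = E ^ Suc k * w" using XX by (simp add: mult.assoc flip: mult.assoc[of X X])
      then show ?thesis using Epow[of "Suc k"] b by simp
    qed
  qed
  have EB: "E * b \<in> W" if "b \<in> B" for b
  proof -
    from that consider (a) k where "k < K" "b = E ^ k * w" | (b) k where "k < K" "b = X * E ^ k * w"
      unfolding B_def by blast
    then show ?thesis
    proof cases
      case a
      then have "E * b = E ^ Suc k * w" by (simp add: mult.assoc)
      then show ?thesis using Epow[of "Suc k"] a by simp
    next
      case b
      then have "E * b = X * E ^ Suc k * w" using EX by (simp add: mult.assoc flip: mult.assoc[of E X])
      then show ?thesis using XEpow[of "Suc k"] b by simp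
    qed
  qed
  have V: "u * v \<in> W" if "u \<in> gen_alg sc {X, E}" "v \<in> W" for u v
    using that
  proof (induction u arbitrary: v rule: gen_alg.induct)
    case (scal a) then show ?case by (rule W_sc)
  next
    case (gen p)
    then show ?case using W_lmul[OF XB Xsc] W_lmul[OF EB Esc] by auto
  next
    case (add a b) then show ?case using W_add by (simp add: distrib_right)
  next
    case (mult a b) then show ?case by (simp add: mult.assoc)
  qed
  have wW: "w \<in> W" using Epow[of 0] by simp
  show ?thesis
  proof (intro exI[of _ B] conjI finB ballI)
    fix u assume "u \<in> gen_alg sc {X, E}"
    from V[OF this wW] show "\<exists>f. u * w - (\<Sum>b\<in>B. sc (f b) * b) \<in> left_ideal2 X E"
      unfolding W_def I_def by blast
  qed
qed


theorem proposition3p4: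
  fixes n :: nat and eta :: "nat \<Rightarrow> nat \<Rightarrow> complex"
    and c :: "complex \<Rightarrow> 'w::ring_1" and x d g :: "nat \<Rightarrow> 'w"
    and phi :: "'w \<Rightarrow> 'l::ring_1"
  assumes "n \<ge> 1"
    and "sym_invertible n eta"
    and "is_W n eta c x d g"
    and "is_localization (Dset (Hop n c x d)) phi"
  shows "locally_finite_quot (phi \<circ> c) (phi (Xop n c d g)) (phi (Eop n eta c d))
           (left_ideal2 (phi (Xop n c d g)) (phi (Eop n eta c d)))"
proof -
  have emb: "is_scalar_emb c" and rel: "W_relations n eta c x d g"
    and genU: "gen_alg c (x ` {..<n} \<union> d ` {..<n} \<union> g ` {..<n}) = UNIV"
    using assms(3) unfolding is_W_def by auto
  interpret W: Wl n eta c x d g by (rule Wl.intro[OF emb rel])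
  let ?D = "Dset (Hop n c x d)"
  let ?XX = "Xop n c d g" and ?EE = "Eop n eta c d"
  have p1: "phi 1 = 1" and padd: "\<And>a b. phi (a + b) = phi a + phi b"
    and pmul: "\<And>a b. phi (a * b) = phi a * phi b"
    and pinv: "\<And>s. s \<in> ?D \<Longrightarrow> \<exists>t. t * phi s = 1 \<and> phi s * t = 1"
    and pfrac: "\<And>y. \<exists>s\<in>?D. \<exists>a t. t * phi s = 1 \<and> y = t * phi a"
    using assms(4) unfolding is_localization_def by blast+
  have p0: "phi 0 = 0"
  proof -
    have "phi 0 + phi 0 = phi 0 + 0" using padd[of 0 0] by simp
    then show ?thesis by (rule add_left_imp_eq)
  qed
  have ppow: "phi (a ^ m) = (phi a) ^ m" for a m
    by (induction m) (simp_all add: p1 pmul)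
  define X' where "X' = phi ?XX"
  define E' where "E' = phi ?EE"
  define sc where "sc = phi \<circ> c"
  have sc_add: "\<And>a b. sc (a + b) = sc a + sc b" unfolding sc_def by (simp add: W.c_add padd)
  have sc_mult: "\<And>a b. sc (a * b) = sc a * sc b" unfolding sc_def by (simp add: W.c_mult pmul)
  have sc0: "sc 0 = 0" unfolding sc_def by (simp add: p0)
  have sc1: "sc 1 = 1" unfolding sc_def by (simp add: p1)
  have XX: "X' * X' = E'" unfolding X'_def E'_def by (simp flip: pmul add: W.XX_sq)
  have EX: "E' * X' = X' * E'" unfolding XX[symmetric] by (simp add: mult.assoc)
  have Xsc: "\<And>a. X' * sc a = sc a * X'" unfolding X'_def sc_def
    by (simp flip: pmul) (metis W.c_comm)
  have Esc: "\<And>a. E' * sc a = sc a * E'" unfolding E'_def sc_def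
    by (simp flip: pmul) (metis W.c_comm)
  show ?thesis unfolding locally_finite_quot_def
  proof
    fix w
    obtain s a t where s: "s \<in> ?D" and ts: "t * phi s = 1" and w: "w = t * phi a"
      using pfrac[of w] by blast
    obtain t2 where t2: "t2 * phi s = 1" "phi s * t2 = 1" using pinv[OF s] by blast
    have "t = t * (phi s * t2)" using t2 by simp
    also have "\<dots> = t2" using ts by (simp flip: mult.assoc)
    finally have st: "phi s * t = 1" using t2 by simp
    define P where "P = (\<lambda>p. \<exists>s\<in>?D. p = phi s)"
    have sh: "\<exists>p'. P p' \<and> E' * p = p' * E'" if hp: "P p" for p
    proof -
      obtain s0 where s0: "s0 \<in> ?D" "p = phi s0" using hp unfolding P_def by blast
      obtain s' where s': "s' \<in> ?D" "?EE * s0 = s' * ?EE" using W.Dset_shift[OF s0(1)] by blast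
      have "E' * p = phi s' * E'" unfolding E'_def s0(2) using s'(2) by (simp flip: pmul)
      then show ?thesis using s'(1) unfolding P_def by blast
    qed
    have inv: "\<exists>t. t * p = 1 \<and> p * t = 1" if "P p" for p
      using that pinv unfolding P_def by blast
    have Pphi: "P (phi s)" unfolding P_def using s by blast
    have "a \<in> gen_alg c (x ` {..<n} \<union> d ` {..<n} \<union> g ` {..<n})" using genU by simp
    then obtain N where N: "\<forall>m. \<exists>b. ?EE ^ (m + N) * a = b * ?EE ^ m" using W.Q_all by blast
    obtain b where b: "?EE ^ (1 + N) * a = b * ?EE ^ 1" using N by blast
    define K where "K = 1 + N"
    obtain y where y: "E' ^ K * t = y * E' ^ K"
      using inv_shift[of P E', OF sh inv Pphi ts st] by blast
    have "E' ^ K * w = (E' ^ K * t) * phi a" unfolding w by (simp add: mult.assoc)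
    also have "\<dots> = (y * E' ^ K) * phi a" by (simp only: y)
    also have "\<dots> = y * phi (?EE ^ K * a)" unfolding E'_def by (simp add: mult.assoc pmul ppow)
    also have "\<dots> = (y * phi b) * E'" unfolding K_def b E'_def by (simp add: mult.assoc pmul)
    finally have fin: "E' ^ K * w = (y * phi b) * E'" .
    have K1: "K \<ge> 1" unfolding K_def by simp
    from span_closed[of sc X' E' K w "y * phi b", OF sc_add sc_mult sc0 sc1 XX EX Xsc Esc K1 fin]
    show "\<exists>B. finite B \<and> (\<forall>u\<in>gen_alg (phi \<circ> c) {phi ?XX, phi ?EE}.
            \<exists>f. u * w - (\<Sum>b\<in>B. (phi \<circ> c) (f b) * b) \<in> left_ideal2 (phi ?XX) (phi ?EE))"
      unfolding sc_def X'_def E'_def .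
  qed
qed

end
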